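(* Let $\mathcal{M}$ be a Riemannian submanifold of a Euclidean space, let $f:\mathcal{M}\times\mathbb{R}^n\to\mathbb{R}$, $\boldsymbol{c}=(c_1,\dots,c_p):\mathcal{M}\times\mathbb{R}^n\to\mathbb{R}^p$ and $\boldsymbol{g}=(g_1,\dots,g_s):\mathbb{R}^n\to\mathbb{R}^s$ be differentiable, and let $(\boldsymbol{x}^*,\boldsymbol{y}^* )$ be feasible, i.e. $\boldsymbol{x}^*\in\mathcal{M}$, $\boldsymbol{c}(\boldsymbol{x}^*,\boldsymbol{y}^* )=\boldsymbol{0}$, $\boldsymbol{g}(\boldsymbol{y}^* )\le\boldsymbol{0}$. Assume the LICQ holds at $\boldsymbol{z}^*=(\boldsymbol{x}^*,\boldsymbol{y}^* )$. Let $\epsilon\ge0$. If $\max\{m_x(\boldsymbol{x}^*,\boldsymbol{y}^* ),m_y(\boldsymbol{x}^*,\boldsymbol{y}^* )\}\le\epsilon$, then $(\boldsymbol{x}^*,\boldsymbol{y}^* )$ is an $\epsilon$-approximate first-order stationary point; and if $m_{KKT}(\boldsymbol{x}^*,\boldsymbol{y}^* )\le\epsilon$, then $(\boldsymbol{x}^*,\boldsymbol{y}^* )$ is an $\epsilon$-approximate first-order KKT point.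
   Context: Write $\mathcal{M}'=\mathcal{M}\times\mathbb{R}^n$ (product Riemannian manifold), $\boldsymbol{z}=(\boldsymbol{x},\boldsymbol{y})$, and $\bar f(\boldsymbol{z})=f(\boldsymbol{x},\boldsymbol{y})$, $\bar c_i(\boldsymbol{z})=c_i(\boldsymbol{x},\boldsymbol{y})$, $\bar g_j(\boldsymbol{z})=g_j(\boldsymbol{y})$. $\operatorname{grad}$ denotes the Riemannian gradient (with respect to $\boldsymbol{x}$ on $\mathcal{M}$ for $f,c_i$; on $\mathcal{M}'$ for $\bar f,\bar c_i,\bar g_j$), $\nabla_y$ the Euclidean gradient in $\boldsymbol{y}$, $\langle\cdot,\cdot\rangle_{\boldsymbol{x}}$ and $\|\cdot\|_{\boldsymbol{x}}$ the Riemannian metric and norm. $\mathcal{A}(\boldsymbol{y})=\{j: g_j(\boldsymbol{y})=0\}$. LICQ at $\boldsymbol{z}$: the vectors $\{\operatorname{grad}\bar c_i(\boldsymbol{z})\}_{i=1}^p\cup\{\operatorname{grad}\bar g_j(\boldsymbol{z})\}_{j\in\mathcal{A}(\boldsymbol{y})}$ are linearly independent in $T_{\boldsymbol{z}}\mathcal{M}'$. Measures: $m_x(\boldsymbol{x},\boldsymbol{y})=|\min\{\langle\operatorname{grad}f(\boldsymbol{x},\boldsymbol{y}),\boldsymbol{d}\rangle_{\boldsymbol{x}}:\boldsymbol{d}\in T_{\boldsymbol{x}}\mathcal{M},\ \langle\operatorname{grad}c_i(\boldsymbol{x},\boldsymbol{y}),\boldsymbol{d}\rangle_{\boldsymbol{x}}=0\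 \forall i,\ \|\boldsymbol{d}\|_{\boldsymbol{x}}\le1\}|$; $m_y(\boldsymbol{x},\boldsymbol{y})=|\min\{\langle\nabla_yf(\boldsymbol{x},\boldsymbol{y}),\boldsymbol{d}\rangle:\boldsymbol{d}\in\mathbb{R}^n,\ \langle\nabla_yc_i(\boldsymbol{x},\boldsymbol{y}),\boldsymbol{d}\rangle=0\ \forall i,\ \langle\nabla g_j(\boldsymbol{y}),\boldsymbol{d}\rangle\le0\ \forall j\in\mathcal{A}(\boldsymbol{y}),\ \|\boldsymbol{d}\|\le1\}|$; $m_{KKT}(\boldsymbol{x},\boldsymbol{y})=|\min\{\langle\operatorname{grad}\bar f(\boldsymbol{z}),\boldsymbol{d}\rangle_{\boldsymbol{z}}:\boldsymbol{d}\in T_{\boldsymbol{z}}\mathcal{M}',\ \langle\operatorname{grad}\bar c_i(\boldsymbol{z}),\boldsymbol{d}\rangle_{\boldsymbol{z}}=0\ \forall i,\ \langle\operatorname{grad}\bar g_j(\boldsymbol{z}),\boldsymbol{d}\rangle_{\boldsymbol{z}}\le0\ \forall j\in\mathcal{A}(\boldsymbol{y}),\ \|\boldsymbol{d}\|_{\boldsymbol{z}}\le1\}|$. A feasible $(\boldsymbol{x}^*,\boldsymbol{y}^* )$ is an $\epsilon$-approximate first-order stationary point if (a) there is $\boldsymbol{\lambda}\in\mathbb{R}^p$ with $\|\operatorname{grad}f(\boldsymbol{x}^*,\boldsymbol{y}^* )+\sum_i\lambda_i\operatorname{grad}c_i(\boldsymbol{x}^*,\boldsymbol{y}^* )\|_{\boldsymbol{x}^*}\le\epsilon$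 and (b) there are $\boldsymbol{\lambda}'\in\mathbb{R}^p$, $\boldsymbol{\mu}\in\mathbb{R}^s_+$ with $\|\nabla_yf+\sum_i\lambda'_i\nabla_yc_i+\sum_j\mu_j\nabla g_j\|\le\epsilon$ at $(\boldsymbol{x}^*,\boldsymbol{y}^* )$ and $\mu_jg_j(\boldsymbol{y}^* )=0$ for all $j$. It is an $\epsilon$-approximate first-order KKT point if there are $\boldsymbol{\lambda}\in\mathbb{R}^p$, $\boldsymbol{\mu}\in\mathbb{R}^s_+$ with $\|\operatorname{grad}\bar f(\boldsymbol{z}^* )+\sum_i\lambda_i\operatorname{grad}\bar c_i(\boldsymbol{z}^* )+\sum_j\mu_j\operatorname{grad}\bar g_j(\boldsymbol{z}^* )\|_{\boldsymbol{z}^*}\le\epsilon$ and $\mu_j\bar g_j(\boldsymbol{z}^* )=0$ for all $j$. *)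

theory Defs
  imports "HOL-Analysis.Analysis"
begin

definition egrad :: "('a::real_inner \<Rightarrow> real) \<Rightarrow> 'a \<Rightarrow> 'a" where
  "egrad F x = (THE v. (F has_derivative (\<lambda>h. v \<bullet> h)) (at x))"

definition submanifold :: "'e::euclidean_space set \<Rightarrow> bool" where
  "submanifold M \<longleftrightarrow>
     (\<forall>x\<in>M. \<exists>U (q::nat) h. open U \<and> x \<in> U \<and>
        (\<forall>i<q. (\<forall>u\<in>U. h i differentiable (at u)) \<and> continuous_on U (egrad (h i))) \<and>
        (\<forall>a. (\<Sum>i<q. a i *\<^sub>R egrad (h i) x) = 0 \<longrightarrow> (\<forall>i<q. a i = 0)) \<and>
        M \<inter> U = {u\<in>U. \<forall>i<q. h i u = 0})"

definition tangent_space :: "'a::real_normed_vector set \<Rightarrow> 'a \<Rightarrow> 'a set" where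
  "tangent_space M x = {v. \<exists>\<gamma> (e::real). e > 0 \<and> \<gamma> 0 = x \<and> (\<forall>t\<in>{-e<..<e}. \<gamma> t \<in> M) \<and>
                            (\<gamma> has_vector_derivative v) (at 0)}"

definition rgrad :: "'a::real_inner set \<Rightarrow> ('a \<Rightarrow> real) \<Rightarrow> 'a \<Rightarrow> 'a" where
  "rgrad M F x = (THE v. v \<in> tangent_space M x \<and>
      (\<forall>d\<in>tangent_space M x. frechet_derivative F (at x) d = v \<bullet> d))"

definition active_set :: "(nat \<Rightarrow> 'b \<Rightarrow> real) \<Rightarrow> nat \<Rightarrow> 'b \<Rightarrow> nat set" where
  "active_set g s y = {j. j < s \<and> g j y = 0}"

definition feasible ::
  "'e::euclidean_space set \<Rightarrow> (nat \<Rightarrow> 'e \<times> (real^'n) \<Rightarrow> real) \<Rightarrow> nat \<Rightarrow>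
   (nat \<Rightarrow> real^'n \<Rightarrow> real) \<Rightarrow> nat \<Rightarrow> 'e \<Rightarrow> real^'n \<Rightarrow> bool" where
  "feasible M c p g s x y \<longleftrightarrow> x \<in> M \<and> (\<forall>i<p. c i (x, y) = 0) \<and> (\<forall>j<s. g j y \<le> 0)"

definition LICQ ::
  "'e::euclidean_space set \<Rightarrow> (nat \<Rightarrow> 'e \<times> (real^'n) \<Rightarrow> real) \<Rightarrow> nat \<Rightarrow>
   (nat \<Rightarrow> real^'n \<Rightarrow> real) \<Rightarrow> nat \<Rightarrow> 'e \<Rightarrow> real^'n \<Rightarrow> bool" where
  "LICQ M c p g s x y \<longleftrightarrow>
     (\<forall>a b. (\<Sum>i<p. a i *\<^sub>R rgrad (M \<times> UNIV) (c i) (x, y))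
          + (\<Sum>j\<in>active_set g s y. b j *\<^sub>R rgrad (M \<times> UNIV) (\<lambda>z. g j (snd z)) (x, y)) = 0
        \<longrightarrow> (\<forall>i<p. a i = 0) \<and> (\<forall>j\<in>active_set g s y. b j = 0))"

definition m_x ::
  "'e::euclidean_space set \<Rightarrow> ('e \<times> (real^'n) \<Rightarrow> real) \<Rightarrow> (nat \<Rightarrow> 'e \<times> (real^'n) \<Rightarrow> real) \<Rightarrow> nat \<Rightarrow>
   'e \<Rightarrow> real^'n \<Rightarrow> real" where
  "m_x M f c p x y = \<bar>Inf {rgrad M (\<lambda>u. f (u, y)) x \<bullet> d | d.
       d \<in> tangent_space M x \<and> (\<forall>i<p. rgrad M (\<lambda>u. c i (u, y)) x \<bullet> d = 0) \<and> norm d \<le> 1}\<bar>"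

definition m_y ::
  "('e::euclidean_space \<times> (real^'n) \<Rightarrow> real) \<Rightarrow> (nat \<Rightarrow> 'e \<times> (real^'n) \<Rightarrow> real) \<Rightarrow> nat \<Rightarrow>
   (nat \<Rightarrow> real^'n \<Rightarrow> real) \<Rightarrow> nat \<Rightarrow> 'e \<Rightarrow> real^'n \<Rightarrow> real" where
  "m_y f c p g s x y = \<bar>Inf {egrad (\<lambda>v. f (x, v)) y \<bullet> d | d.
       (\<forall>i<p. egrad (\<lambda>v. c i (x, v)) y \<bullet> d = 0) \<and>
       (\<forall>j\<in>active_set g s y. egrad (g j) y \<bullet> d \<le> 0) \<and> norm d \<le> 1}\<bar>"

definition m_KKT ::
  "'e::euclidean_space set \<Rightarrow> ('e \<times> (real^'n) \<Rightarrow> real) \<Rightarrow> (nat \<Rightarrow> 'e \<times> (real^'n) \<Rightarrow> real) \<Rightarrow> nat \<Rightarrow>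
   (nat \<Rightarrow> real^'n \<Rightarrow> real) \<Rightarrow> nat \<Rightarrow> 'e \<Rightarrow> real^'n \<Rightarrow> real" where
  "m_KKT M f c p g s x y = \<bar>Inf {rgrad (M \<times> UNIV) f (x, y) \<bullet> d | d.
       d \<in> tangent_space (M \<times> UNIV) (x, y) \<and>
       (\<forall>i<p. rgrad (M \<times> UNIV) (c i) (x, y) \<bullet> d = 0) \<and>
       (\<forall>j\<in>active_set g s y. rgrad (M \<times> UNIV) (\<lambda>z. g j (snd z)) (x, y) \<bullet> d \<le> 0) \<and>
       norm d \<le> 1}\<bar>"

definition eps_stationary ::
  "real \<Rightarrow> 'e::euclidean_space set \<Rightarrow> ('e \<times> (real^'n) \<Rightarrow> real) \<Rightarrow> (nat \<Rightarrow> 'e \<times> (real^'n) \<Rightarrow> real) \<Rightarrow> nat \<Rightarrow>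
   (nat \<Rightarrow> real^'n \<Rightarrow> real) \<Rightarrow> nat \<Rightarrow> 'e \<Rightarrow> real^'n \<Rightarrow> bool" where
  "eps_stationary \<epsilon> M f c p g s x y \<longleftrightarrow> feasible M c p g s x y \<and>
     (\<exists>lam. norm (rgrad M (\<lambda>u. f (u, y)) x + (\<Sum>i<p. lam i *\<^sub>R rgrad M (\<lambda>u. c i (u, y)) x)) \<le> \<epsilon>) \<and>
     (\<exists>lam2 \<mu>. (\<forall>j<s. \<mu> j \<ge> 0) \<and>
        norm (egrad (\<lambda>v. f (x, v)) y + (\<Sum>i<p. lam2 i *\<^sub>R egrad (\<lambda>v. c i (x, v)) y)
              + (\<Sum>j<s. \<mu> j *\<^sub>R egrad (g j) y)) \<le> \<epsilon> \<and>
        (\<forall>j<s. \<mu> j * g j y = 0))"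

definition eps_KKT ::
  "real \<Rightarrow> 'e::euclidean_space set \<Rightarrow> ('e \<times> (real^'n) \<Rightarrow> real) \<Rightarrow> (nat \<Rightarrow> 'e \<times> (real^'n) \<Rightarrow> real) \<Rightarrow> nat \<Rightarrow>
   (nat \<Rightarrow> real^'n \<Rightarrow> real) \<Rightarrow> nat \<Rightarrow> 'e \<Rightarrow> real^'n \<Rightarrow> bool" where
  "eps_KKT \<epsilon> M f c p g s x y \<longleftrightarrow> feasible M c p g s x y \<and>
     (\<exists>lam \<mu>. (\<forall>j<s. \<mu> j \<ge> 0) \<and>
        norm (rgrad (M \<times> UNIV) f (x, y) + (\<Sum>i<p. lam i *\<^sub>R rgrad (M \<times> UNIV) (c i) (x, y))
              + (\<Sum>j<s. \<mu> j *\<^sub>R rgrad (M \<times> UNIV) (\<lambda>z. g j (snd z)) (x, y))) \<le> \<epsilon> \<and>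
        (\<forall>j<s. \<mu> j * g j y = 0))"

end

theory Submission
  imports Defs
begin


lemma sum_single_scaleR:
  fixes f :: "nat \<Rightarrow> 'a::real_vector"
  assumes "finite S" "i \<in> S"
  shows "(\<Sum>k\<in>S. (if k = i then c else 0) *\<^sub>R f k) = c *\<^sub>R f i"
proof -
  have "(\<Sum>k\<in>S. (if k = i then c else 0) *\<^sub>R f k) = (\<Sum>k\<in>S. if k = i then c *\<^sub>R f k else 0)"
    by (rule sum.cong) auto
  also have "\<dots> = c *\<^sub>R f i" using assms by (simp add: sum.delta')
  finally show ?thesis .
qed

lemma cone_lemma:
  fixes v :: "'a::euclidean_space" and w u :: "nat \<Rightarrow> 'a" and T :: "'a set"
  assumes T: "subspace T" and vT: "v \<in> T" and wT: "\<forall>i<p. w i \<in> T" and uT: "\<forall>j\<in>A. u j \<in> T"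
    and A: "finite A"
    and m: "\<bar>Inf {v \<bullet> d | d. d \<in> T \<and> (\<forall>i<p. w i \<bullet> d = 0) \<and> (\<forall>j\<in>A. u j \<bullet> d \<le> 0) \<and> norm d \<le> 1}\<bar> \<le> \<epsilon>"
  shows "\<exists>lam \<mu>. (\<forall>j\<in>A. \<mu> j \<ge> 0) \<and> norm (v + (\<Sum>i<p. lam i *\<^sub>R w i) + (\<Sum>j\<in>A. \<mu> j *\<^sub>R u j)) \<le> \<epsilon>"
proof -
  define X where "X = insert 0 (w ` {..<p} \<union> (\<lambda>i. - w i) ` {..<p} \<union> u ` A)"
  define K where "K = conic hull (convex hull X)"
  define C where "C = {(\<Sum>i<p. a i *\<^sub>R w i) + (\<Sum>j\<in>A. b j *\<^sub>R u j) | a b. \<forall>j\<in>A. b j \<ge> 0}"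
  have finX: "finite X" using A by (simp add: X_def)
  have memC: "(\<Sum>i<p. a i *\<^sub>R w i) + (\<Sum>j\<in>A. b j *\<^sub>R u j) \<in> C" if "\<forall>j\<in>A. b j \<ge> 0" for a b
    unfolding C_def using that by blast
  have convC: "convex C"
  proof (rule convexI)
    fix x y :: 'a and s t :: real
    assume "x \<in> C" "y \<in> C" "0 \<le> s" "0 \<le> t" "s + t = 1"
    then obtain a b a' b' where x: "x = (\<Sum>i<p. a i *\<^sub>R w i) + (\<Sum>j\<in>A. b j *\<^sub>R u j)" "\<forall>j\<in>A. b j \<ge> 0"
      and y: "y = (\<Sum>i<p. a' i *\<^sub>R w i) + (\<Sum>j\<in>A. b' j *\<^sub>R u j)" "\<forall>j\<in>A. b' j \<ge> 0"
      unfolding C_def by blast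
    have "s *\<^sub>R x + t *\<^sub>R y = (\<Sum>i<p. (s * a i + t * a' i) *\<^sub>R w i) + (\<Sum>j\<in>A. (s * b j + t * b' j) *\<^sub>R u j)"
      by (simp add: x y scaleR_add_right scaleR_sum_right sum.distrib scaleR_add_left algebra_simps)
    moreover have "\<forall>j\<in>A. s * b j + t * b' j \<ge> 0" using x y \<open>0 \<le> s\<close> \<open>0 \<le> t\<close> by simp
    ultimately show "s *\<^sub>R x + t *\<^sub>R y \<in> C" using memC[where a="\<lambda>i. s * a i + t * a' i" and b="\<lambda>j. s * b j + t * b' j"] by simp
  qed
  have conC: "conic C"
  unfolding conic_def
  proof (intro allI impI)
    fix x :: 'a and c :: real assume "x \<in> C" "0 \<le> c"
    then obtain a b where x: "x = (\<Sum>i<p. a i *\<^sub>R w i) + (\<Sum>j\<in>A. b j *\<^sub>R u j)" "\<forall>j\<in>A. b j \<ge> 0"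
      unfolding C_def by blast
    have "c *\<^sub>R x = (\<Sum>i<p. (c * a i) *\<^sub>R w i) + (\<Sum>j\<in>A. (c * b j) *\<^sub>R u j)"
      by (simp add: x scaleR_add_right scaleR_sum_right)
    moreover have "\<forall>j\<in>A. c * b j \<ge> 0" using x \<open>0 \<le> c\<close> by simp
    ultimately show "c *\<^sub>R x \<in> C" using memC[where a="\<lambda>i. c * a i" and b="\<lambda>j. c * b j"] by simp
  qed
  have XC: "X \<subseteq> C"
  proof
    fix x assume "x \<in> X"
    then consider "x = 0" | i where "i < p" "x = w i" | i where "i < p" "x = - w i" | j where "j \<in> A" "x = u j"
      unfolding X_def by blast
    then show "x \<in> C"
    proof cases
      case 1
      then show ?thesis using memC[where a="\<lambda>_. 0" and b="\<lambda>_. 0"] by simp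
    next
      case (2 i)
      have "x = (\<Sum>k<p. (if k = i then 1 else 0) *\<^sub>R w k) + (\<Sum>j\<in>A. (0::real) *\<^sub>R u j)"
        using 2 by (simp add: sum_single_scaleR)
      then show ?thesis using memC[where a="\<lambda>k. if k = i then 1 else 0" and b="\<lambda>_. 0"] by simp
    next
      case (3 i)
      have "x = (\<Sum>k<p. (if k = i then -1 else 0) *\<^sub>R w k) + (\<Sum>j\<in>A. (0::real) *\<^sub>R u j)"
        using 3 by (simp add: sum_single_scaleR)
      then show ?thesis using memC[where a="\<lambda>k. if k = i then -1 else 0" and b="\<lambda>_. 0"] by simp
    next
      case (4 j)
      have "x = (\<Sum>k<p. (0::real) *\<^sub>R w k) + (\<Sum>l\<in>A. (if l = j then 1 else 0) *\<^sub>R u l)"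
        using 4 A by (simp add: sum_single_scaleR)
      then show ?thesis using memC[where a="\<lambda>_. 0" and b="\<lambda>l. if l = j then 1 else 0"] by simp
    qed
  qed
  have KC: "K \<subseteq> C"
    unfolding K_def
  proof (rule hull_minimal[where S=conic])
    show "convex hull X \<subseteq> C" using XC convC by (rule hull_minimal)
  qed (rule conC)
  have CT: "C \<subseteq> T"
  proof
    fix x assume "x \<in> C"
    then obtain a b where x: "x = (\<Sum>i<p. a i *\<^sub>R w i) + (\<Sum>j\<in>A. b j *\<^sub>R u j)"
      unfolding C_def by blast
    show "x \<in> T" unfolding x
      using wT uT by (intro subspace_add[OF T] subspace_sum[OF T] subspace_mul[OF T]) auto
  qed
  have closedK: "closed K" unfolding K_def
    by (rule closed_conic_hull_strong) (simp add: polytope_convex_hull finX)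
  have convK: "convex K" unfolding K_def by (simp add: convex_conic_hull)
  have conK: "conic K" unfolding K_def by (simp add: conic_conic_hull)
  have XK: "X \<subseteq> K" unfolding K_def
    by (meson hull_subset order_trans)
  have 0: "0 \<in> K" using XK X_def by auto
  define k where "k = closest_point K (- v)"
  have kK: "k \<in> K" unfolding k_def using closedK 0 by (auto intro: closest_point_in_set)
  define e where "e = - v - k"
  have dot: "e \<bullet> (x - k) \<le> 0" if "x \<in> K" for x
    unfolding e_def k_def using closest_point_dot[OF convK closedK that] .
  have "e \<bullet> k = 0"
  proof -
    have "2 *\<^sub>R k \<in> K" using conK kK by (simp add: conic_def)
    from dot[OF this] dot[OF 0] show ?thesis by (simp add: inner_diff_right algebra_simps)
  qed
  then have dotX: "e \<bullet> x \<le> 0" if "x \<in> X" for x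
    using dot[of x] XK that by (auto simp: inner_diff_right)
  obtain a b where kab: "k = (\<Sum>i<p. a i *\<^sub>R w i) + (\<Sum>j\<in>A. b j *\<^sub>R u j)" and b: "\<forall>j\<in>A. b j \<ge> 0"
    using KC kK unfolding C_def by blast
  have eq: "v + (\<Sum>i<p. a i *\<^sub>R w i) + (\<Sum>j\<in>A. b j *\<^sub>R u j) = - e"
    by (simp add: e_def kab)
  let ?S = "{v \<bullet> d | d. d \<in> T \<and> (\<forall>i<p. w i \<bullet> d = 0) \<and> (\<forall>j\<in>A. u j \<bullet> d \<le> 0) \<and> norm d \<le> 1}"
  have "norm e \<le> \<epsilon>"
  proof (cases "e = 0")
    case True
    then show ?thesis using m by simp
  next
    case False
    define d where "d = (1 / norm e) *\<^sub>R e"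
    have ne: "norm e > 0" using False by simp
    have "d \<in> T" unfolding d_def e_def
      using kK KC CT vT by (intro subspace_mul[OF T] subspace_diff[OF T] subspace_neg[OF T]) auto
    moreover have "\<forall>i<p. w i \<bullet> d = 0"
    proof (intro allI impI)
      fix i assume "i < p"
      then have "e \<bullet> w i \<le> 0" "e \<bullet> (- w i) \<le> 0" using dotX[of "w i"] dotX[of "- w i"] unfolding X_def by auto
      then show "w i \<bullet> d = 0" by (simp add: d_def inner_commute)
    qed
    moreover have "\<forall>j\<in>A. u j \<bullet> d \<le> 0"
    proof
      fix j assume "j \<in> A"
      then have "e \<bullet> u j \<le> 0" using dotX[of "u j"] unfolding X_def by auto
      then show "u j \<bullet> d \<le> 0" using ne by (simp add: d_def inner_commute divide_nonpos_pos)
    qed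
    moreover have "norm d \<le> 1" using ne by (simp add: d_def)
    ultimately have mem: "v \<bullet> d \<in> ?S" by blast
    have vd: "v \<bullet> d = - norm e"
    proof -
      have "v = - e - k" by (simp add: e_def)
      then have "v \<bullet> e = - (e \<bullet> e)" using \<open>e \<bullet> k = 0\<close> by (simp add: inner_diff_left inner_diff_right inner_commute)
      then show ?thesis using ne by (simp add: d_def power2_norm_eq_inner[symmetric] power2_eq_square)
    qed
    have bdd: "bdd_below ?S"
    proof (rule bdd_belowI)
      fix r assume "r \<in> ?S"
      then obtain d' where "r = v \<bullet> d'" "norm d' \<le> 1" by blast
      moreover have "- (v \<bullet> d') \<le> norm v * norm d'"
        using Cauchy_Schwarz_ineq2[of v d'] by (simp add: abs_le_iff)
      moreover have "norm v * norm d' \<le> norm v" using \<open>norm d' \<le> 1\<close>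
        by (simp add: mult_left_le)
      ultimately show "- norm v \<le> r" by linarith
    qed
    have "Inf ?S \<le> - norm e" using cInf_lower[OF mem bdd] vd by simp
    then show ?thesis using m ne by linarith
  qed
  then show ?thesis using eq b by (intro exI[of _ a] exI[of _ b]) simp
qed



lemma egrad_works:
  fixes F :: "'a::euclidean_space \<Rightarrow> real"
  assumes "F differentiable (at x)"
  shows "(F has_derivative (\<lambda>h. egrad F x \<bullet> h)) (at x)"
proof -
  obtain D where D: "(F has_derivative D) (at x)" using assms by (auto simp: differentiable_def)
  have lin: "linear D" using D has_derivative_linear by blast
  define v where "v = (\<Sum>b\<in>Basis. D b *\<^sub>R b)"
  have Dv: "D = (\<lambda>h. v \<bullet> h)"
  proof
    fix h :: 'a
    have "D h = D (\<Sum>b\<in>Basis. (h \<bullet> b) *\<^sub>R b)" by (simp add: euclidean_representation)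
    also have "\<dots> = (\<Sum>b\<in>Basis. (h \<bullet> b) * D b)" by (simp add: linear_sum[OF lin] linear_scale[OF lin])
    also have "\<dots> = v \<bullet> h" by (simp add: v_def inner_sum_right inner_commute mult.commute)
    finally show "D h = v \<bullet> h" .
  qed
  have "egrad F x = v"
    unfolding egrad_def
  proof (rule the_equality)
    show "(F has_derivative (\<lambda>h. v \<bullet> h)) (at x)" using D Dv by simp
  next
    fix v' assume "(F has_derivative (\<lambda>h. v' \<bullet> h)) (at x)"
    then have "(\<lambda>h. v' \<bullet> h) = (\<lambda>h. v \<bullet> h)" using D Dv has_derivative_unique by blast
    then have "v' \<bullet> (v' - v) = v \<bullet> (v' - v)" by metis
    then have "(v' - v) \<bullet> (v' - v) = 0" by (simp add: inner_diff_left)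
    then show "v' = v" by simp
  qed
  then show ?thesis using D Dv by simp
qed

lemma proj_exists_unique:
  fixes T :: "'a::euclidean_space set"
  assumes T: "subspace T" and lin: "linear D"
  shows "\<exists>!v. v \<in> T \<and> (\<forall>d\<in>T. D d = v \<bullet> d)"
proof -
  define e where "e = (\<Sum>b\<in>Basis. D b *\<^sub>R b)"
  have De: "D h = e \<bullet> h" for h
  proof -
    have "D h = D (\<Sum>b\<in>Basis. (h \<bullet> b) *\<^sub>R b)" by (simp add: euclidean_representation)
    also have "\<dots> = (\<Sum>b\<in>Basis. (h \<bullet> b) * D b)" by (simp add: linear_sum[OF lin] linear_scale[OF lin])
    also have "\<dots> = e \<bullet> h" by (simp add: e_def inner_sum_right inner_commute mult.commute)
    finally show ?thesis .
  qed
  obtain y z where y: "y \<in> span T" and z: "\<And>w. w \<in> span T \<Longrightarrow> orthogonal z w" and ez: "e = y + z"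
    using orthogonal_subspace_decomp_exists[of T e] by metis
  have yT: "y \<in> T" using y T by (metis span_eq_iff)
  show ?thesis
  proof (rule ex1I[of _ y])
    show "y \<in> T \<and> (\<forall>d\<in>T. D d = y \<bullet> d)"
      using yT z by (auto simp: De ez inner_add_left orthogonal_def span_base)
  next
    fix v assume v: "v \<in> T \<and> (\<forall>d\<in>T. D d = v \<bullet> d)"
    have "v - y \<in> T" using v yT T by (simp add: subspace_diff)
    then have "v \<bullet> (v - y) = y \<bullet> (v - y)" using v yT z
      by (auto simp: De ez inner_add_left orthogonal_def span_base)
    then have "(v - y) \<bullet> (v - y) = 0" by (simp add: inner_diff_left)
    then show "v = y" by simp
  qed
qed

lemma rgrad_in:
  fixes F :: "'a::euclidean_space \<Rightarrow> real"
  assumes T: "subspace (tangent_space S z)" and F: "F differentiable (at z)"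
  shows "rgrad S F z \<in> tangent_space S z"
proof -
  have "linear (frechet_derivative F (at z))"
    using F frechet_derivative_works has_derivative_linear by blast
  from theI'[OF proj_exists_unique[OF T this]] show ?thesis
    unfolding rgrad_def by blast
qed

lemma tangent_space_Times:
  fixes M :: "'a::real_normed_vector set"
  shows "tangent_space (M \<times> (UNIV::'b::real_normed_vector set)) (x, y) = tangent_space M x \<times> UNIV"
proof safe
  fix a b assume "(a, b) \<in> tangent_space (M \<times> (UNIV::'b set)) (x, y)"
  then obtain \<gamma> e where e: "e > 0" "\<gamma> 0 = (x, y)" "\<forall>t\<in>{-e<..<e}. \<gamma> t \<in> M \<times> UNIV"
    "(\<gamma> has_vector_derivative (a, b)) (at 0)" unfolding tangent_space_def by blast
  have "((\<lambda>t. fst (\<gamma> t)) has_vector_derivative a) (at 0)"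
    using e(4) unfolding has_vector_derivative_def
    by (auto intro!: derivative_eq_intros)
  then show "a \<in> tangent_space M x" unfolding tangent_space_def using e
    by (intro CollectI exI[of _ "\<lambda>t. fst (\<gamma> t)"] exI[of _ e]) (auto simp: mem_Times_iff)
next
  fix a b assume "a \<in> tangent_space M x"
  then obtain \<gamma> e where e: "e > 0" "\<gamma> 0 = x" "\<forall>t\<in>{-e<..<e}. \<gamma> t \<in> M"
    "(\<gamma> has_vector_derivative a) (at 0)" unfolding tangent_space_def by blast
  have "((\<lambda>t. (\<gamma> t, y + t *\<^sub>R b)) has_vector_derivative (a, b)) (at 0)"
    using e(4) by (auto intro!: derivative_eq_intros)
  then show "(a, b) \<in> tangent_space (M \<times> (UNIV::'b set)) (x, y)" unfolding tangent_space_def using e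
    by (intro CollectI exI[of _ "\<lambda>t. (\<gamma> t, y + t *\<^sub>R b)"] exI[of _ e]) auto
qed simp



lemma tangent_subset_N:
  fixes M :: "'a::euclidean_space set"
  assumes U: "open U" "x \<in> U" and hd: "\<forall>i<q. \<forall>u\<in>U. h i differentiable (at u)"
    and MU: "M \<inter> U = {u\<in>U. \<forall>i<q. h i u = 0}"
    and v: "v \<in> tangent_space M x" and i: "i < q"
  shows "egrad (h i) x \<bullet> v = 0"
proof -
  obtain \<gamma> e where e: "e > 0" "\<gamma> 0 = x" "\<forall>t\<in>{-e<..<e}. \<gamma> t \<in> M"
    and gd: "(\<gamma> has_vector_derivative v) (at 0)" using v unfolding tangent_space_def by blast
  have "continuous (at 0) \<gamma>" using gd by (rule has_vector_derivative_continuous)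
  then obtain \<delta> where \<delta>: "\<delta> > 0" "\<forall>t. dist t 0 < \<delta> \<longrightarrow> \<gamma> t \<in> U"
    using U e(2) unfolding continuous_at_eps_delta
    by (metis open_contains_ball_eq mem_ball subsetD dist_commute)
  define r where "r = min \<delta> e"
  have r: "r > 0" using \<delta> e by (simp add: r_def)
  have zero: "h i (\<gamma> t) = 0" if "t \<in> ball 0 r" for t
  proof -
    have "\<gamma> t \<in> U" using \<delta> that by (auto simp: r_def dist_commute)
    moreover have "\<gamma> t \<in> M" using e(3) that by (auto simp: r_def dist_real_def abs_less_iff)
    ultimately show ?thesis using MU i by blast
  qed
  have hder: "(h i has_derivative (\<lambda>k. egrad (h i) x \<bullet> k)) (at (\<gamma> 0))"
    using egrad_works hd i U e(2) by auto
  have "((\<lambda>t. h i (\<gamma> t)) has_derivative (\<lambda>t. egrad (h i) x \<bullet> (t *\<^sub>R v))) (at 0)"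
    using has_derivative_compose[OF gd[unfolded has_vector_derivative_def] hder] .
  then have "((\<lambda>t. 0::real) has_derivative (\<lambda>t. egrad (h i) x \<bullet> (t *\<^sub>R v))) (at 0)"
    by (rule has_derivative_transform_within_open[where s="ball 0 r"]) (use r zero in auto)
  then have "(\<lambda>t. egrad (h i) x \<bullet> (t *\<^sub>R v)) = (\<lambda>t. 0)"
    using has_derivative_unique has_derivative_const by blast
  then show ?thesis by (metis scaleR_one)
qed



lemma N_subset_tangent:
  fixes M :: "'a::euclidean_space set" and h :: "nat \<Rightarrow> 'a \<Rightarrow> real"
  assumes U: "open U" "x \<in> U"
    and hd: "\<forall>i<q. (\<forall>u\<in>U. h i differentiable (at u)) \<and> continuous_on U (egrad (h i))"
    and ind: "\<forall>a. (\<Sum>i<q. a i *\<^sub>R egrad (h i) x) = 0 \<longrightarrow> (\<forall>i<q. a i = 0)"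
    and MU: "M \<inter> U = {u\<in>U. \<forall>i<q. h i u = 0}"
    and xM: "x \<in> M"
    and v: "\<forall>i<q. egrad (h i) x \<bullet> v = 0"
  shows "v \<in> tangent_space M x"
proof -
  define g where "g i = egrad (h i) x" for i
  define N where "N = {w. \<forall>i<q. g i \<bullet> w = 0}"
  have subN: "subspace N" unfolding N_def subspace_def by (auto simp: inner_add_right)
  obtain B where B: "B \<subseteq> N" "independent B" "span B = N"
    using orthogonal_basis_subspace[OF subN] by metis
  have finB: "finite B" using B(2) by (rule finiteI_independent)
  define P where "P k = (\<Sum>b\<in>B. (b \<bullet> k) *\<^sub>R b)" for k
  have linP: "linear P" unfolding P_def
    by (intro linearI) (auto simp: inner_add_right scaleR_add_left sum.distrib scaleR_sum_right)
  have blP: "bounded_linear P" using linP by (simp add: linear_conv_bounded_linear)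
  have PN: "P k \<in> N" for k
  proof -
    have "P k \<in> span B" unfolding P_def by (intro span_sum span_mul span_base) auto
    then show ?thesis using B(3) by simp
  qed
  define L where "L u k = (\<Sum>i<q. (egrad (h i) u \<bullet> k) *\<^sub>R g i) + P k" for u k
  have blL: "bounded_linear (L u)" for u
    unfolding L_def
    by (intro bounded_linear_add bounded_linear_sum blP)
      (auto intro: bounded_linear_compose[OF bounded_linear_scaleR_left bounded_linear_inner_right])
  define F where "F u = (\<Sum>i<q. h i u *\<^sub>R g i) + P (u - x)" for u
  define F' where "F' u = Blinfun (L u)" for u
  have F'apply: "blinfun_apply (F' u) = L u" for u
    unfolding F'_def using blL by (simp add: bounded_linear_Blinfun_apply)
  have derF: "(F has_derivative blinfun_apply (F' u)) (at u)" if "u \<in> U" for u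
  proof -
    have "\<And>i. i < q \<Longrightarrow> (h i has_derivative (\<lambda>k. egrad (h i) u \<bullet> k)) (at u)"
      using hd that egrad_works by blast
    moreover have "((\<lambda>u. P (u - x)) has_derivative (\<lambda>k. P k)) (at u)"
      using bounded_linear.has_derivative[OF blP has_derivative_diff[OF has_derivative_ident has_derivative_const[of x]]]
      by simp
    ultimately have "(F has_derivative (\<lambda>k. (\<Sum>i<q. (egrad (h i) u \<bullet> k) *\<^sub>R g i) + P k)) (at u)"
      unfolding F_def
      by (intro derivative_eq_intros has_derivative_sum) auto
    then show ?thesis by (simp add: F'apply L_def[abs_def])
  qed
  have contF': "continuous_on U F'"
  proof (rule continuous_on_blinfun_componentwise)
    fix b :: 'a assume "b \<in> Basis"
    have "continuous_on U (\<lambda>u. (\<Sum>i<q. (egrad (h i) u \<bullet> b) *\<^sub>R g i) + P b)"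
      using hd by (intro continuous_intros) auto
    then show "continuous_on U (\<lambda>u. blinfun_apply (F' u) b)" by (simp add: F'apply L_def)
  qed

  have Lx: "L x k = (\<Sum>i<q. (g i \<bullet> k) *\<^sub>R g i) + P k" for k
    by (simp add: L_def g_def)
  have Lx0: "k = 0" if "L x k = 0" for k
  proof -
    have "k \<bullet> L x k = (\<Sum>i<q. (g i \<bullet> k)\<^sup>2) + (\<Sum>b\<in>B. (b \<bullet> k)\<^sup>2)"
      by (simp add: Lx P_def inner_add_right inner_sum_right inner_commute power2_eq_square)
    then have sum0: "(\<Sum>i<q. (g i \<bullet> k)\<^sup>2) + (\<Sum>b\<in>B. (b \<bullet> k)\<^sup>2) = 0" using that by simp
    have s1: "(\<Sum>i<q. (g i \<bullet> k)\<^sup>2) \<ge> 0" "(\<Sum>b\<in>B. (b \<bullet> k)\<^sup>2) \<ge> 0"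
      by (auto intro: sum_nonneg)
    then have "(\<Sum>i<q. (g i \<bullet> k)\<^sup>2) = 0" "(\<Sum>b\<in>B. (b \<bullet> k)\<^sup>2) = 0" using sum0 by linarith+
    then have gi: "\<forall>i<q. g i \<bullet> k = 0" and bk: "\<forall>b\<in>B. b \<bullet> k = 0"
      using finB by (simp_all add: sum_nonneg_eq_0_iff)
    have "k \<in> span B" using gi B(3) by (simp add: N_def)
    then have "orthogonal k k"
      by (rule orthogonal_to_span) (use bk in \<open>auto simp: orthogonal_def inner_commute\<close>)
    then show "k = 0" by (simp add: orthogonal_def)
  qed
  have linLx: "linear (L x)" using blL bounded_linear.linear by blast
  have injLx: "inj (L x)"
  proof (rule injI)
    fix a b assume "L x a = L x b"
    then have "L x (a - b) = 0" by (simp add: linear_diff[OF linLx])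
    then show "a = b" using Lx0[of "a - b"] by simp
  qed
  obtain g0 where g0: "linear g0" "g0 \<circ> L x = id"
    using linear_injective_left_inverse[OF linLx injLx] by blast
  have blg0: "bounded_linear g0" using g0(1) by (simp add: linear_conv_bounded_linear)
  define invf where "invf = Blinfun g0"
  have invf: "invf o\<^sub>L F' x = id_blinfun"
  proof (rule blinfun_eqI)
    fix k
    have "g0 (L x k) = k" using g0(2) by (metis comp_apply id_apply)
    then show "blinfun_apply (invf o\<^sub>L F' x) k = blinfun_apply id_blinfun k"
      by (simp add: invf_def bounded_linear_Blinfun_apply[OF blg0] F'apply)
  qed
  obtain U' V G G' where IFT: "open U'" "U' \<subseteq> U" "x \<in> U'" "open V" "F x \<in> V" "homeomorphism U' V F G"
    and derG: "\<And>y. y \<in> V \<Longrightarrow> (G has_derivative (G' y)) (at y)"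
    and G': "\<And>y. y \<in> V \<Longrightarrow> G' y = inv (blinfun_apply (F' (G y)))"
    using inverse_function_theorem[OF U(1) derF contF' U(2) invf] by metis
  have hx: "h i x = 0" if "i < q" for i using xM U(2) MU that by blast
  have Fx: "F x = 0" by (simp add: F_def hx linear_0[OF linP])
  have G0: "G 0 = x" using homeomorphism_apply1[OF IFT(6) IFT(3)] Fx by simp
  have V0: "0 \<in> V" using IFT(5) Fx by simp
  define z where "z = L x v"
  have zP: "z = P v" using v by (simp add: z_def Lx g_def)
  obtain r where r: "r > 0" "ball 0 r \<subseteq> V" using IFT(4) V0 open_contains_ball by blast
  define e where "e = r / (norm z + 1)"
  have nz: "norm z + 1 > 0" by (simp add: add_nonneg_pos)
  have e: "e > 0" using r nz by (simp add: e_def)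
  define \<gamma> where "\<gamma> t = G (t *\<^sub>R z)" for t
  have inM: "\<gamma> t \<in> M" if t: "t \<in> {-e<..<e}" for t
  proof -
    have "\<bar>t\<bar> < e" using t by auto
    then have "\<bar>t\<bar> * (norm z + 1) < r" using r nz by (simp add: e_def pos_less_divide_eq)
    moreover have "\<bar>t\<bar> * norm z \<le> \<bar>t\<bar> * (norm z + 1)" by (simp add: mult_left_mono)
    ultimately have "norm (t *\<^sub>R z) < r" by simp
    then have tzV: "t *\<^sub>R z \<in> V" using r by auto
    define u where "u = \<gamma> t"
    have uU': "u \<in> U'" unfolding u_def \<gamma>_def using IFT(6) tzV
      by (metis homeomorphism_image2 imageI)
    then have uU: "u \<in> U" using IFT(2) by blast
    have Fu: "F u = t *\<^sub>R z" unfolding u_def \<gamma>_def using homeomorphism_apply2[OF IFT(6) tzV] .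
    define \<rho> where "\<rho> = (\<Sum>i<q. h i u *\<^sub>R g i)"
    have "\<rho> = t *\<^sub>R z - P (u - x)" using Fu by (simp add: F_def \<rho>_def algebra_simps)
    moreover have "t *\<^sub>R z \<in> N" using PN zP subN by (simp add: subspace_mul)
    ultimately have \<rho>N: "\<rho> \<in> N" using PN subN by (simp add: subspace_diff)
    have "\<rho> \<bullet> \<rho> = (\<Sum>i<q. h i u * (g i \<bullet> \<rho>))"
      by (simp add: \<rho>_def[of] inner_sum_left)
    also have "\<dots> = 0" using \<rho>N by (simp add: N_def)
    finally have "\<rho> = 0" by simp
    then have "\<forall>i<q. h i u = 0" using ind[rule_format, of "\<lambda>i. h i u"] by (simp add: \<rho>_def g_def)
    then show "\<gamma> t \<in> M" using uU MU u_def by blast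
  qed
  have "(G has_derivative G' (0 *\<^sub>R z)) (at (0 *\<^sub>R z))" using derG V0 by simp
  from has_derivative_compose[OF has_derivative_scaleR_left[OF has_derivative_ident, of z] this]
  have d1: "(\<gamma> has_derivative (\<lambda>t. G' 0 (t *\<^sub>R z))) (at 0)" by (simp add: \<gamma>_def[abs_def])
  have "G' 0 (t *\<^sub>R z) = t *\<^sub>R v" for t
  proof -
    have "G' 0 = inv (L x)" using G'[OF V0] G0 F'apply by simp
    moreover have "t *\<^sub>R z = L x (t *\<^sub>R v)" by (simp add: z_def linear_scale[OF linLx])
    ultimately show ?thesis using injLx by (simp add: inv_f_f)
  qed
  with d1 have "(\<gamma> has_vector_derivative v) (at 0)" by (simp add: has_vector_derivative_def)
  moreover have "\<gamma> 0 = x" using G0 by (simp add: \<gamma>_def)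
  ultimately show ?thesis unfolding tangent_space_def using e inM by blast
qed

lemma tangent_subspace:
  fixes M :: "'a::euclidean_space set"
  assumes "submanifold M" "x \<in> M"
  shows "subspace (tangent_space M x)"
proof -
  have "\<exists>U (q::nat) h. open U \<and> x \<in> U \<and>
        (\<forall>i<q. (\<forall>u\<in>U. h i differentiable (at u)) \<and> continuous_on U (egrad (h i))) \<and>
        (\<forall>a. (\<Sum>i<q. a i *\<^sub>R egrad (h i) x) = 0 \<longrightarrow> (\<forall>i<q. a i = 0)) \<and>
        M \<inter> U = {u\<in>U. \<forall>i<q. h i u = 0}"
    using assms(1)[unfolded submanifold_def] assms(2) by (rule bspec)
  then obtain U q h where H: "open U \<and> x \<in> U \<and>
        (\<forall>i<(q::nat). (\<forall>u\<in>U. h i differentiable (at u)) \<and> continuous_on U (egrad (h i))) \<and>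
        (\<forall>a. (\<Sum>i<q. a i *\<^sub>R egrad (h i) x) = 0 \<longrightarrow> (\<forall>i<q. a i = 0)) \<and>
        M \<inter> U = {u\<in>U. \<forall>i<q. h i u = 0}"
    by blast
  note U = H[THEN conjunct1] H[THEN conjunct2, THEN conjunct1]
  note hd = H[THEN conjunct2, THEN conjunct2, THEN conjunct1]
  note ind = H[THEN conjunct2, THEN conjunct2, THEN conjunct2, THEN conjunct1]
  note MU = H[THEN conjunct2, THEN conjunct2, THEN conjunct2, THEN conjunct2]
  have "tangent_space M x = {v. \<forall>i<q. egrad (h i) x \<bullet> v = 0}"
  proof
    show "tangent_space M x \<subseteq> {v. \<forall>i<q. egrad (h i) x \<bullet> v = 0}"
    proof
      fix v assume "v \<in> tangent_space M x"
      then show "v \<in> {v. \<forall>i<q. egrad (h i) x \<bullet> v = 0}"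
        using tangent_subset_N[OF U _ MU, of v] hd by simp
    qed
    show "{v. \<forall>i<q. egrad (h i) x \<bullet> v = 0} \<subseteq> tangent_space M x"
      using N_subset_tangent[OF U hd ind MU assms(2)] by (rule subsetI) simp
  qed
  then show ?thesis by (simp add: subspace_def inner_add_right)
qed

lemma subspace_Times_UNIV:
  assumes "subspace (S :: 'a::real_vector set)"
  shows "subspace (S \<times> (UNIV :: 'b::real_vector set))"
  using assms unfolding subspace_def by (auto simp: zero_prod_def)

lemma diff_snd:
  fixes G :: "'b::real_normed_vector \<Rightarrow> real"
  assumes "G differentiable (at (snd z))"
  shows "(\<lambda>w. G (snd w)) differentiable (at (z :: 'a::real_normed_vector \<times> 'b))"
proof -
  have "snd differentiable (at z)" by (rule bounded_linear_imp_differentiable[OF bounded_linear_snd])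
  from differentiable_chain_at[OF this assms] show ?thesis by (simp add: o_def)
qed

lemma diff_fst_slice:
  fixes F :: "'a::real_normed_vector \<times> 'b::real_normed_vector \<Rightarrow> real"
  assumes "F differentiable (at (x, y))"
  shows "(\<lambda>u. F (u, y)) differentiable (at x)"
proof -
  have "((\<lambda>u. (u, y)) has_derivative (\<lambda>k. (k, 0))) (at x)" by (auto intro!: derivative_eq_intros)
  then have "(\<lambda>u. (u, y)) differentiable (at x)" by (rule differentiableI)
  from differentiable_chain_at[OF this] assms show ?thesis by (simp add: o_def)
qed

lemma sum_active:
  fixes u :: "nat \<Rightarrow> 'a::real_vector"
  assumes "A \<subseteq> {..<s}"
  shows "(\<Sum>j<s. (if j \<in> A then \<mu> j else 0) *\<^sub>R u j) = (\<Sum>j\<in>A. \<mu> j *\<^sub>R u j)"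
proof -
  have "(\<Sum>j<s. (if j \<in> A then \<mu> j else 0) *\<^sub>R u j) = (\<Sum>j<s. if j \<in> A then \<mu> j *\<^sub>R u j else 0)"
    by (rule sum.cong) auto
  also have "\<dots> = (\<Sum>j\<in>{..<s} \<inter> A. \<mu> j *\<^sub>R u j)" by (simp add: sum.inter_restrict)
  also have "{..<s} \<inter> A = A" using assms by blast
  finally show ?thesis .
qed

theorem proposition4:
  fixes M :: "'e::euclidean_space set"
    and f :: "'e \<times> (real^'n) \<Rightarrow> real"
    and c :: "nat \<Rightarrow> 'e \<times> (real^'n) \<Rightarrow> real" and p :: nat
    and g :: "nat \<Rightarrow> real^'n \<Rightarrow> real" and s :: nat
    and xs :: 'e and ys :: "real^'n" and \<epsilon> :: real
  assumes "submanifold M"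
    and "\<forall>z\<in>M \<times> UNIV. f differentiable (at z)"
    and "\<forall>i<p. \<forall>z\<in>M \<times> UNIV. c i differentiable (at z)"
    and "\<forall>j<s. \<forall>y. g j differentiable (at y)"
    and "xs \<in> M" and "\<forall>i<p. c i (xs, ys) = 0" and "\<forall>j<s. g j ys \<le> 0"
    and "LICQ M c p g s xs ys"
    and "\<epsilon> \<ge> 0"
  shows "(max (m_x M f c p xs ys) (m_y f c p g s xs ys) \<le> \<epsilon> \<longrightarrow> eps_stationary \<epsilon> M f c p g s xs ys)
       \<and> (m_KKT M f c p g s xs ys \<le> \<epsilon> \<longrightarrow> eps_KKT \<epsilon> M f c p g s xs ys)"
proof -
  have feas: "feasible M c p g s xs ys" using assms(5-7) by (simp add: feasible_def)
  have TM: "subspace (tangent_space M xs)" using tangent_subspace[OF assms(1,5)] .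
  have TP: "subspace (tangent_space (M \<times> UNIV) (xs, ys))"
    using subspace_Times_UNIV[OF TM] by (simp add: tangent_space_Times)
  have fd: "f differentiable (at (xs, ys))" using assms(2,5) by simp
  have cd: "c i differentiable (at (xs, ys))" if "i < p" for i using assms(3,5) that by simp
  have gd: "(\<lambda>z. g j (snd z)) differentiable (at (xs, ys))" if "j < s" for j
    using assms(4) that by (intro diff_snd) simp
  define A where "A = active_set g s ys"
  have A: "A \<subseteq> {..<s}" by (auto simp: A_def active_set_def)
  have finA: "finite A" using A finite_subset by blast
  have mu_compl: "\<forall>j<s. (if j \<in> A then \<mu> j else 0) * g j ys = 0" for \<mu> :: "nat \<Rightarrow> real"
    by (auto simp: A_def active_set_def)
  show ?thesis
  proof (intro conjI impI)
    assume mm: "max (m_x M f c p xs ys) (m_y f c p g s xs ys) \<le> \<epsilon>"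
    have "\<exists>lam \<mu>. (\<forall>j\<in>({}::nat set). \<mu> j \<ge> 0) \<and> norm (rgrad M (\<lambda>u. f (u, ys)) xs + (\<Sum>i<p. lam i *\<^sub>R rgrad M (\<lambda>u. c i (u, ys)) xs) + (\<Sum>j\<in>{}. \<mu> j *\<^sub>R (0::'e))) \<le> \<epsilon>"
    proof (rule cone_lemma[OF TM, where A="{}::nat set" and u="\<lambda>_. 0" and p=p and v="rgrad M (\<lambda>u. f (u, ys)) xs" and w="\<lambda>i. rgrad M (\<lambda>u. c i (u, ys)) xs"])
      show "rgrad M (\<lambda>u. f (u, ys)) xs \<in> tangent_space M xs"
        using rgrad_in[OF TM diff_fst_slice[OF fd]] .
      show "\<forall>i<p. rgrad M (\<lambda>u. c i (u, ys)) xs \<in> tangent_space M xs"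
        using rgrad_in[OF TM diff_fst_slice[OF cd]] by blast
      show "\<bar>Inf {rgrad M (\<lambda>u. f (u, ys)) xs \<bullet> d | d. d \<in> tangent_space M xs \<and> (\<forall>i<p. rgrad M (\<lambda>u. c i (u, ys)) xs \<bullet> d = 0) \<and> (\<forall>j\<in>({}::nat set). (0::'e) \<bullet> d \<le> 0) \<and> norm d \<le> 1}\<bar> \<le> \<epsilon>"
        using mm by (simp add: m_x_def)
    qed auto
    then obtain lam where lam: "norm (rgrad M (\<lambda>u. f (u, ys)) xs + (\<Sum>i<p. lam i *\<^sub>R rgrad M (\<lambda>u. c i (u, ys)) xs)) \<le> \<epsilon>"
      by auto
    have "\<exists>lam \<mu>. (\<forall>j\<in>A. \<mu> j \<ge> 0) \<and> norm (egrad (\<lambda>v. f (xs, v)) ys + (\<Sum>i<p. lam i *\<^sub>R egrad (\<lambda>v. c i (xs, v)) ys) + (\<Sum>j\<in>A. \<mu> j *\<^sub>R egrad (g j) ys)) \<le> \<epsilon>"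
    proof (rule cone_lemma[where T=UNIV and A=A and p=p and u="\<lambda>j. egrad (g j) ys" and v="egrad (\<lambda>v. f (xs, v)) ys" and w="\<lambda>i. egrad (\<lambda>v. c i (xs, v)) ys"])
      show "\<bar>Inf {egrad (\<lambda>v. f (xs, v)) ys \<bullet> d | d. d \<in> UNIV \<and> (\<forall>i<p. egrad (\<lambda>v. c i (xs, v)) ys \<bullet> d = 0) \<and> (\<forall>j\<in>A. egrad (g j) ys \<bullet> d \<le> 0) \<and> norm d \<le> 1}\<bar> \<le> \<epsilon>"
        using mm by (simp add: m_y_def A_def)
    qed (auto simp: finA)
    then obtain lam2 \<mu> where mu: "\<forall>j\<in>A. \<mu> j \<ge> 0"
      and nm: "norm (egrad (\<lambda>v. f (xs, v)) ys + (\<Sum>i<p. lam2 i *\<^sub>R egrad (\<lambda>v. c i (xs, v)) ys) + (\<Sum>j\<in>A. \<mu> j *\<^sub>R egrad (g j) ys)) \<le> \<epsilon>"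
      by blast
    define \<mu>' where "\<mu>' j = (if j \<in> A then \<mu> j else 0)" for j
    have "(\<Sum>j<s. \<mu>' j *\<^sub>R egrad (g j) ys) = (\<Sum>j\<in>A. \<mu> j *\<^sub>R egrad (g j) ys)"
      unfolding \<mu>'_def by (rule sum_active[OF A])
    then show "eps_stationary \<epsilon> M f c p g s xs ys"
      unfolding eps_stationary_def using feas lam nm mu mu_compl[of \<mu>]
      by (intro conjI exI[of _ lam] exI[of _ lam2] exI[of _ \<mu>']) (auto simp: \<mu>'_def)
  next
    assume mk: "m_KKT M f c p g s xs ys \<le> \<epsilon>"
    have "\<exists>lam \<mu>. (\<forall>j\<in>A. \<mu> j \<ge> 0) \<and> norm (rgrad (M \<times> UNIV) f (xs, ys) + (\<Sum>i<p. lam i *\<^sub>R rgrad (M \<times> UNIV) (c i) (xs, ys)) + (\<Sum>j\<in>A. \<mu> j *\<^sub>R rgrad (M \<times> UNIV) (\<lambda>z. g j (snd z)) (xs, ys))) \<le> \<epsilon>"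
    proof (rule cone_lemma[OF TP, where A=A and p=p and u="\<lambda>j. rgrad (M \<times> UNIV) (\<lambda>z. g j (snd z)) (xs, ys)" and v="rgrad (M \<times> UNIV) f (xs, ys)" and w="\<lambda>i. rgrad (M \<times> UNIV) (c i) (xs, ys)"])
      show "rgrad (M \<times> UNIV) f (xs, ys) \<in> tangent_space (M \<times> UNIV) (xs, ys)"
        using rgrad_in[OF TP fd] .
      show "\<forall>i<p. rgrad (M \<times> UNIV) (c i) (xs, ys) \<in> tangent_space (M \<times> UNIV) (xs, ys)"
        using rgrad_in[OF TP cd] by blast
      show "\<forall>j\<in>A. rgrad (M \<times> UNIV) (\<lambda>z. g j (snd z)) (xs, ys) \<in> tangent_space (M \<times> UNIV) (xs, ys)"
        using rgrad_in[OF TP gd] A by blast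
      show "\<bar>Inf {rgrad (M \<times> UNIV) f (xs, ys) \<bullet> d | d. d \<in> tangent_space (M \<times> UNIV) (xs, ys) \<and> (\<forall>i<p. rgrad (M \<times> UNIV) (c i) (xs, ys) \<bullet> d = 0) \<and> (\<forall>j\<in>A. rgrad (M \<times> UNIV) (\<lambda>z. g j (snd z)) (xs, ys) \<bullet> d \<le> 0) \<and> norm d \<le> 1}\<bar> \<le> \<epsilon>"
        using mk by (simp add: m_KKT_def A_def)
    qed (simp add: finA)
    then obtain lam \<mu> where mu: "\<forall>j\<in>A. \<mu> j \<ge> 0"
      and nm: "norm (rgrad (M \<times> UNIV) f (xs, ys) + (\<Sum>i<p. lam i *\<^sub>R rgrad (M \<times> UNIV) (c i) (xs, ys)) + (\<Sum>j\<in>A. \<mu> j *\<^sub>R rgrad (M \<times> UNIV) (\<lambda>z. g j (snd z)) (xs, ys))) \<le> \<epsilon>"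
      by blast
    define \<mu>' where "\<mu>' j = (if j \<in> A then \<mu> j else 0)" for j
    have "(\<Sum>j<s. \<mu>' j *\<^sub>R rgrad (M \<times> UNIV) (\<lambda>z. g j (snd z)) (xs, ys)) = (\<Sum>j\<in>A. \<mu> j *\<^sub>R rgrad (M \<times> UNIV) (\<lambda>z. g j (snd z)) (xs, ys))"
      unfolding \<mu>'_def by (rule sum_active[OF A])
    then show "eps_KKT \<epsilon> M f c p g s xs ys"
      unfolding eps_KKT_def using feas nm mu mu_compl[of \<mu>]
      by (intro conjI exI[of _ lam] exI[of _ \<mu>']) (auto simp: \<mu>'_def)
  qed
qed

end
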